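(* Let $(K\subseteq L,v)$ be a valued field extension. Suppose that every $y\in L$ can be written as $y=x+a$ with $a\in K$ and $x\in L$ such that $|v(x)|>\Gamma_K$. Then the extension $L|K$ is $vs$-defectless.
   Context: $\Gamma_K$ is the value group of $K$ inside $\Gamma_L$; $|v(x)|>\Gamma_K$ means $v(x)>\gamma$ for all $\gamma\in\Gamma_K$ or $v(x)<\gamma$ for all $\gamma\in\Gamma_K$ (with $v(0)=\infty>\Gamma_K$). A set $\{a_1,\dots,a_n\}\subseteq L$ is $K$-valuation independent if $v(\sum_i c_ia_i)=\min_i v(c_ia_i)$ for all $c_i\in K$; $L|K$ is $vs$-defectless if every finitely generated $K$-vector subspace of $L$ is spanned by a $K$-valuation independent set. *)

theory Defs
  imports Main "HOL-Library.Extended"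
begin

definition valuation :: "('b::field \<Rightarrow> 'g::linordered_ab_group_add extended) \<Rightarrow> bool" where
  "valuation v \<longleftrightarrow>
     v 0 = Pinf \<and>
     (\<forall>x. x \<noteq> 0 \<longrightarrow> (\<exists>g. v x = Fin g)) \<and>
     (\<forall>x y. v (x * y) = v x + v y) \<and>
     (\<forall>x y. min (v x) (v y) \<le> v (x + y))"

text \<open>K is a subfield of the field 'b (which plays the role of L).\<close>
definition subfield :: "'b::field set \<Rightarrow> bool" where
  "subfield K \<longleftrightarrow> 0 \<in> K \<and> 1 \<in> K \<and>
     (\<forall>x\<in>K. \<forall>y\<in>K. x + y \<in> K \<and> x * y \<in> K) \<and>
     (\<forall>x\<in>K. - x \<in> K \<and> inverse x \<in> K)"

definition value_group :: "('b::field \<Rightarrow> 'g extended) \<Rightarrow> 'b set \<Rightarrow> 'g set" where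
  "value_group v K = {g. \<exists>a\<in>K. a \<noteq> 0 \<and> v a = Fin g}"

definition abs_val_gt :: "('b::field \<Rightarrow> 'g::linorder extended) \<Rightarrow> 'b set \<Rightarrow> 'b \<Rightarrow> bool" where
  "abs_val_gt v K x \<longleftrightarrow>
     (\<forall>g\<in>value_group v K. Fin g < v x) \<or> (\<forall>g\<in>value_group v K. v x < Fin g)"

definition val_independent ::
  "('b::field \<Rightarrow> 'g::linordered_ab_group_add extended) \<Rightarrow> 'b set \<Rightarrow> 'b set \<Rightarrow> bool" where
  "val_independent v K A \<longleftrightarrow> finite A \<and>
     (\<forall>c. c ` A \<subseteq> K \<longrightarrow>
        v (\<Sum>a\<in>A. c a * a) = Min (insert Pinf ((\<lambda>a. v (c a * a)) ` A)))"

definition Kspan :: "'b::field set \<Rightarrow> 'b set \<Rightarrow> 'b set" where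
  "Kspan K F = {\<Sum>a\<in>S. c a * a | S c. finite S \<and> S \<subseteq> F \<and> c ` S \<subseteq> K}"

definition vs_defectless ::
  "('b::field \<Rightarrow> 'g::linordered_ab_group_add extended) \<Rightarrow> 'b set \<Rightarrow> bool" where
  "vs_defectless v K \<longleftrightarrow>
     (\<forall>F. finite F \<longrightarrow> (\<exists>B. val_independent v K B \<and> Kspan K B = Kspan K F))"

end

theory Submission
  imports Defs
begin


lemma subfield_0: "subfield K \<Longrightarrow> 0 \<in> K" unfolding subfield_def by blast
lemma subfield_1: "subfield K \<Longrightarrow> 1 \<in> K" unfolding subfield_def by blast
lemma subfield_inv: "subfield K \<Longrightarrow> x \<in> K \<Longrightarrow> inverse x \<in> K" unfolding subfield_def by blast
lemma subfield_neg: "subfield K \<Longrightarrow> x \<in> K \<Longrightarrow> - x \<in> K" unfolding subfield_def by blast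

lemma subfield_diff: "subfield K \<Longrightarrow> x \<in> K \<Longrightarrow> y \<in> K \<Longrightarrow> x - y \<in> K"
  unfolding subfield_def by (metis diff_conv_add_uminus)
lemma subfield_mult: "subfield K \<Longrightarrow> x \<in> K \<Longrightarrow> y \<in> K \<Longrightarrow> x * y \<in> K"
  unfolding subfield_def by blast
lemma subfield_add: "subfield K \<Longrightarrow> x \<in> K \<Longrightarrow> y \<in> K \<Longrightarrow> x + y \<in> K"
  unfolding subfield_def by blast

lemma ext_add_min: "(x::'g::linordered_ab_group_add extended) + min y z = min (x+y) (x+z)"
proof (cases "y \<le> z")
  case True
  then have "x + y \<le> x + z" by (rule add_left_mono)
  then show ?thesis using True by (simp add: min_def)
next
  case False
  then have "z \<le> y" by simp
  then have "x + z \<le> x + y" by (rule add_left_mono)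
  then show ?thesis using False by (auto simp add: min_def intro: antisym)
qed

lemma Fin0_add: "Fin (0::'g::linordered_ab_group_add) + e = e"
  by (cases e) auto

context
  fixes v :: "'b::field \<Rightarrow> 'g::linordered_ab_group_add extended"
  assumes val: "valuation v"
begin

lemma v0: "v 0 = Pinf" using val by (simp add: valuation_def)
lemma vfin: "x \<noteq> 0 \<Longrightarrow> \<exists>g. v x = Fin g" using val by (simp add: valuation_def)
lemma vmult: "v (x * y) = v x + v y" using val by (simp add: valuation_def)
lemma vtri: "min (v x) (v y) \<le> v (x + y)" using val by (simp add: valuation_def)
lemma vPinf: "v x = Pinf \<longleftrightarrow> x = 0"
  using vfin[of x] v0 by (cases "x = 0") auto

lemma v1: "v 1 = Fin 0"
proof -
  obtain g where g: "v 1 = Fin g" using vfin by fastforce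
  have "v 1 = Fin (g + g)" using vmult[of 1 1] g by simp
  then have "g + g = g" using g by simp
  then have "g = 0" by (metis add_cancel_right_right)
  then show ?thesis using g by simp
qed

lemma vneg: "v (- x) = v x"
proof -
  obtain h where h: "v (-1) = Fin h" using vfin by fastforce
  have "v 1 = Fin (h + h)" using vmult[of "-1" "-1"] h by simp
  then have hh: "h + h = 0" using v1 by simp
  have "h = 0"
  proof (rule ccontr)
    assume "h \<noteq> 0"
    then have "h < 0 \<or> h > 0" by auto
    then show False
    proof
      assume "h < 0" then have "h + h < 0" by (simp add: add_neg_neg)
      then show False using hh by simp
    next
      assume "h > 0" then have "h + h > 0" by (simp add: add_pos_pos)
      then show False using hh by simp
    qed
  qed
  have "v (- x) = v ((-1) * x)" by simp
  also have "\<dots> = v x" using vmult h \<open>h = 0\<close> Fin0_add by metis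
  finally show ?thesis .
qed

lemma vinv: "v x = Fin g \<Longrightarrow> x \<noteq> 0 \<Longrightarrow> v (inverse x) = Fin (- g)"
proof -
  assume g: "v x = Fin g" and x: "x \<noteq> 0"
  obtain h where h: "v (inverse x) = Fin h" using vfin x by (meson inverse_nonzero_iff_nonzero)
  have "v (x * inverse x) = Fin (g + h)" using vmult g h by simp
  then have "g + h = 0" using x v1 by simp
  then have "h = - g" by (simp add: eq_neg_iff_add_eq_0 add.commute)
  then show ?thesis using h by simp
qed

lemma vless: "v x < v z \<Longrightarrow> v (x + z) = v x"
proof -
  assume a: "v x < v z"
  have "min (v (x+z)) (v (-z)) \<le> v (x + z + - z)" by (rule vtri)
  then have "min (v (x+z)) (v z) \<le> v x" by (simp add: vneg)
  then have "v (x+z) \<le> v x" using a by (auto simp: min_def split: if_splits)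
  moreover have "v x \<le> v (x+z)" using vtri[of x z] a by (auto simp: min_def split: if_splits)
  ultimately show ?thesis by simp
qed

lemma vneq: "v x \<noteq> v z \<Longrightarrow> v (x + z) = min (v x) (v z)"
proof -
  assume "v x \<noteq> v z"
  then have "v x < v z \<or> v z < v x" by auto
  then show ?thesis
  proof
    assume "v x < v z" then show ?thesis using vless by simp
  next
    assume "v z < v x" then show ?thesis using vless[of z x] by (simp add: add.commute)
  qed
qed


lemma vg0: "subfield K \<Longrightarrow> 0 \<in> value_group v K"
  using v1 unfolding value_group_def subfield_def by force

lemma vg_diff: "subfield K \<Longrightarrow> g \<in> value_group v K \<Longrightarrow> h \<in> value_group v K \<Longrightarrow> g - h \<in> value_group v K"
proof -
  assume K: "subfield K" and g: "g \<in> value_group v K" and h: "h \<in> value_group v K"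
  obtain a where a: "a \<in> K" "a \<noteq> 0" "v a = Fin g" using g unfolding value_group_def by blast
  obtain b where b: "b \<in> K" "b \<noteq> 0" "v b = Fin h" using h unfolding value_group_def by blast
  have "a * inverse b \<in> K" using K a b unfolding subfield_def by blast
  moreover have "a * inverse b \<noteq> 0" using a b by simp
  moreover have "v (a * inverse b) = Fin (g - h)" using vmult vinv[OF b(3) b(2)] a by simp
  ultimately show ?thesis unfolding value_group_def by blast
qed

definition orth :: "'b set \<Rightarrow> 'b set \<Rightarrow> 'b \<Rightarrow> bool" where
  "orth K B z \<longleftrightarrow> (\<forall>c. c ` B \<subseteq> K \<longrightarrow>
     v (z + (\<Sum>b\<in>B. c b * b)) = min (v z) (v (\<Sum>b\<in>B. c b * b)))"

lemma vi_insert: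
  assumes K: "subfield K" and vi: "val_independent v K B" and zB: "z \<notin> B" and o: "orth K B z"
  shows "val_independent v K (insert z B)"
proof -
  have fin: "finite B" using vi unfolding val_independent_def by simp
  have "v (\<Sum>a\<in>insert z B. c a * a) = Min (insert Pinf ((\<lambda>a. v (c a * a)) ` insert z B))"
    if cK: "c ` insert z B \<subseteq> K" for c
  proof -
    define S where "S = (\<Sum>a\<in>B. c a * a)"
    have vS: "v S = Min (insert Pinf ((\<lambda>a. v (c a * a)) ` B))"
      using vi cK unfolding val_independent_def S_def by auto
    have key: "v (c z * z + S) = min (v (c z * z)) (v S)"
    proof (cases "c z = 0")
      case True then show ?thesis by (simp add: v0)
    next
      case False
      define t where "t = c z"
      have tK: "t \<in> K" using cK t_def by auto
      define c' where "c' = (\<lambda>a. c a * inverse t)"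
      have "inverse t \<in> K" using K tK by (rule subfield_inv)
      then have c'K: "c' ` B \<subseteq> K" using cK K unfolding c'_def by (auto intro: subfield_mult)
      define S' where "S' = (\<Sum>a\<in>B. c' a * a)"
      have tt: "t * (c a * inverse t * a) = c a * a" for a using False t_def by (simp add: field_simps)
      have SS: "S = t * S'" unfolding S_def S'_def c'_def sum_distrib_left tt ..
      have oz: "v (z + S') = min (v z) (v S')" using o c'K unfolding orth_def S'_def by blast
      have "c z * z + S = t * (z + S')" using SS t_def by (simp add: distrib_left)
      then have "v (c z * z + S) = v t + min (v z) (v S')" using vmult oz by simp
      also have "\<dots> = min (v t + v z) (v t + v S')" by (rule ext_add_min)
      also have "\<dots> = min (v (c z * z)) (v S)" using SS t_def vmult by simp
      finally show ?thesis .
    qed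
    have "(\<Sum>a\<in>insert z B. c a * a) = c z * z + S" using fin zB S_def by simp
    moreover have "insert Pinf ((\<lambda>a. v (c a * a)) ` insert z B) = insert (v (c z * z)) (insert Pinf ((\<lambda>a. v (c a * a)) ` B))"
      by auto
    moreover have "Min (insert (v (c z * z)) (insert Pinf ((\<lambda>a. v (c a * a)) ` B)))
       = min (v (c z * z)) (Min (insert Pinf ((\<lambda>a. v (c a * a)) ` B)))"
      using fin by (simp add: Min_insert)
    ultimately show ?thesis using key vS by simp
  qed
  then show ?thesis using fin unfolding val_independent_def by simp
qed

end


lemma Kspan_fin:
  assumes K: "subfield K" and fin: "finite F"
  shows "Kspan K F = {\<Sum>a\<in>F. c a * a | c. c ` F \<subseteq> K}"
proof
  show "{\<Sum>a\<in>F. c a * a | c. c ` F \<subseteq> K} \<subseteq> Kspan K F"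
    unfolding Kspan_def using fin by blast
  show "Kspan K F \<subseteq> {\<Sum>a\<in>F. c a * a | c. c ` F \<subseteq> K}"
  proof
    fix x assume "x \<in> Kspan K F"
    then obtain S c where S: "finite S" "S \<subseteq> F" "c ` S \<subseteq> K" and x: "x = (\<Sum>a\<in>S. c a * a)"
      unfolding Kspan_def by blast
    define c' where "c' = (\<lambda>a. if a \<in> S then c a else 0)"
    have "c' ` F \<subseteq> K" using S subfield_0[OF K] unfolding c'_def by auto
    moreover have "(\<Sum>a\<in>F. c' a * a) = (\<Sum>a\<in>S. c' a * a)"
      by (rule sum.mono_neutral_right[OF fin S(2)]) (auto simp: c'_def)
    moreover have "(\<Sum>a\<in>S. c' a * a) = x" unfolding x c'_def by simp
    ultimately show "x \<in> {\<Sum>a\<in>F. c a * a | c. c ` F \<subseteq> K}" by auto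
  qed
qed

lemma Kspan_add:
  assumes K: "subfield K" and fin: "finite F" and "x \<in> Kspan K F" "y \<in> Kspan K F"
  shows "x + y \<in> Kspan K F"
proof -
  obtain c d where "c ` F \<subseteq> K" "d ` F \<subseteq> K" "x = (\<Sum>a\<in>F. c a * a)" "y = (\<Sum>a\<in>F. d a * a)"
    using assms Kspan_fin[OF K fin] by auto
  moreover have "(\<lambda>a. c a + d a) ` F \<subseteq> K" using calculation K by (auto intro: subfield_add)
  moreover have "x + y = (\<Sum>a\<in>F. (c a + d a) * a)" using calculation
    by (simp add: sum.distrib distrib_right)
  ultimately show ?thesis using Kspan_fin[OF K fin] by auto
qed

lemma Kspan_smult:
  assumes K: "subfield K" and fin: "finite F" and "x \<in> Kspan K F" "t \<in> K"
  shows "t * x \<in> Kspan K F"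
proof -
  obtain c where "c ` F \<subseteq> K" "x = (\<Sum>a\<in>F. c a * a)"
    using assms Kspan_fin[OF K fin] by auto
  moreover have "(\<lambda>a. t * c a) ` F \<subseteq> K" using calculation K assms(4) by (auto intro: subfield_mult)
  moreover have "t * x = (\<Sum>a\<in>F. (t * c a) * a)" using calculation
    by (simp add: sum_distrib_left mult.assoc)
  ultimately show ?thesis using Kspan_fin[OF K fin] by auto
qed

lemma Kspan_diff:
  assumes K: "subfield K" and fin: "finite F" and "x \<in> Kspan K F" "y \<in> Kspan K F"
  shows "x - y \<in> Kspan K F"
proof -
  have "-1 \<in> K" using K by (simp add: subfield_1 subfield_neg)
  then have "(-1) * y \<in> Kspan K F" by (rule Kspan_smult[OF K fin assms(4)])
  then have "x + (-1) * y \<in> Kspan K F" by (rule Kspan_add[OF K fin assms(3)])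
  then show ?thesis by simp
qed

lemma Kspan_sub: "subfield K \<Longrightarrow> finite F \<Longrightarrow> F \<subseteq> Kspan K F"
proof
  fix x assume K: "subfield K" and "finite F" and x: "x \<in> F"
  have "{x} \<subseteq> F" "(\<lambda>_. 1) ` {x} \<subseteq> K" using x subfield_1[OF K] by auto
  then have "(\<Sum>a\<in>{x}. 1 * a) \<in> Kspan K F" unfolding Kspan_def
    by (intro CollectI exI[of _ "{x}"] exI[of _ "\<lambda>_. 1"]) simp
  then show "x \<in> Kspan K F" by simp
qed

lemma Kspan_insert:
  assumes K: "subfield K" and fin: "finite F" and yF: "y \<notin> F"
  shows "Kspan K (insert y F) = {t * y + u | t u. t \<in> K \<and> u \<in> Kspan K F}"
proof -
  have fin2: "finite (insert y F)" using fin by simp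
  show ?thesis
  proof
    show "Kspan K (insert y F) \<subseteq> {t * y + u | t u. t \<in> K \<and> u \<in> Kspan K F}"
    proof
      fix x assume "x \<in> Kspan K (insert y F)"
      then obtain c where c: "c ` insert y F \<subseteq> K" "x = (\<Sum>a\<in>insert y F. c a * a)"
        using Kspan_fin[OF K fin2] by auto
      then have "x = c y * y + (\<Sum>a\<in>F. c a * a)" using fin yF by simp
      moreover have "(\<Sum>a\<in>F. c a * a) \<in> Kspan K F" using Kspan_fin[OF K fin] c by auto
      ultimately show "x \<in> {t * y + u | t u. t \<in> K \<and> u \<in> Kspan K F}" using c by auto
    qed
    show "{t * y + u | t u. t \<in> K \<and> u \<in> Kspan K F} \<subseteq> Kspan K (insert y F)"
    proof
      fix x assume "x \<in> {t * y + u | t u. t \<in> K \<and> u \<in> Kspan K F}"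
      then obtain t u where tu: "t \<in> K" "u \<in> Kspan K F" "x = t * y + u" by blast
      obtain c where c: "c ` F \<subseteq> K" "u = (\<Sum>a\<in>F. c a * a)"
        using Kspan_fin[OF K fin] tu by auto
      define c' where "c' = c(y := t)"
      have "c' ` insert y F \<subseteq> K" using c tu yF unfolding c'_def by auto
      moreover have "(\<Sum>a\<in>F. c' a * a) = u" unfolding c(2) c'_def using yF
        by (intro sum.cong) auto
      moreover have "(\<Sum>a\<in>insert y F. c' a * a) = t * y + (\<Sum>a\<in>F. c' a * a)"
        using fin yF c'_def by simp
      ultimately show "x \<in> Kspan K (insert y F)" using Kspan_fin[OF K fin2] tu by auto
    qed
  qed
qed



definition cnt :: "('b::field \<Rightarrow> 'g::linordered_ab_group_add extended) \<Rightarrow> 'b set \<Rightarrow> 'b set \<Rightarrow> 'b \<Rightarrow> nat" where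
  "cnt v K B z = card {b\<in>B. \<exists>g\<in>value_group v K. v z \<le> v b + Fin g}"

lemma approx:
  fixes v :: "'b::field \<Rightarrow> 'g::linordered_ab_group_add extended"
  assumes val: "valuation v" and K: "subfield K"
    and hyp: "\<forall>y. \<exists>x a. a \<in> K \<and> y = x + a \<and> abs_val_gt v K x"
    and vi: "val_independent v K B"
  shows "\<exists>c. c ` B \<subseteq> K \<and> orth v K B (y - (\<Sum>b\<in>B. c b * b))"
proof (induction "cnt v K B y" arbitrary: y rule: less_induct)
  case less
  have fin: "finite B" using vi unfolding val_independent_def by simp
  show ?case
  proof (cases "orth v K B y")
    case True
    then show ?thesis using subfield_0[OF K] by (intro exI[of _ "\<lambda>_. 0"]) auto
  next
    case False
    then obtain c where cK: "c ` B \<subseteq> K"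
      and ne: "v (y + (\<Sum>b\<in>B. c b * b)) \<noteq> min (v y) (v (\<Sum>b\<in>B. c b * b))"
      unfolding orth_def[OF val] by auto
    define S where "S = (\<Sum>b\<in>B. c b * b)"
    have ne': "v (y + S) \<noteq> min (v y) (v S)" using ne S_def by simp
    have ge: "min (v y) (v S) \<le> v (y + S)" by (rule vtri[OF val])
    have eq: "v y = v S" using ne' vneq[OF val, of y S] by auto
    have gt: "v y < v (y + S)" using ge ne' eq by simp
    have y0: "y \<noteq> 0" using ne' by (auto simp: v0[OF val])
    obtain gy where gy: "v y = Fin gy" using vfin[OF val y0] by blast
    have vS: "v S = Min (insert Pinf ((\<lambda>a. v (c a * a)) ` B))"
      using vi cK unfolding val_independent_def S_def by auto
    have "Min (insert Pinf ((\<lambda>a. v (c a * a)) ` B)) \<in> insert Pinf ((\<lambda>a. v (c a * a)) ` B)"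
      using fin by (intro Min_in) auto
    moreover have "v S \<noteq> Pinf" using eq gy by (metis extended.distinct(1))
    ultimately obtain b0 where b0: "b0 \<in> B" "v S = v (c b0 * b0)" using vS by auto
    have cb0: "c b0 \<noteq> 0" "b0 \<noteq> 0" using b0 \<open>v S \<noteq> Pinf\<close> by (auto simp: v0[OF val])
    obtain g0 where g0: "v (c b0) = Fin g0" using vfin[OF val cb0(1)] by blast
    have g0K: "g0 \<in> value_group v K" using g0 cb0 cK b0 unfolding value_group_def by auto
    obtain gb where gb: "v b0 = Fin gb" using vfin[OF val cb0(2)] by blast
    have vy: "v y = Fin (g0 + gb)" using eq b0 g0 gb vmult[OF val] by simp
    define w where "w = - S"
    have vw: "v w = v y" using eq vneg[OF val] w_def by simp
    have w0: "w \<noteq> 0" using vw gy by (auto simp: v0[OF val])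
    define q where "q = y * inverse w"
    have vq: "v q = Fin 0" unfolding q_def using vmult[OF val] vinv[OF val _ w0, of gy] vw gy by simp
    obtain m a where a: "a \<in> K" and qma: "q = m + a" and mabs: "abs_val_gt v K m" using hyp by blast
    have mbig: "\<forall>g\<in>value_group v K. Fin g < v m"
    proof (rule ccontr)
      assume "\<not> ?thesis"
      then have small: "\<forall>g\<in>value_group v K. v m < Fin g" using mabs unfolding abs_val_gt_def by blast
      then have m0: "v m < Fin 0" using vg0[OF val K] by blast
      have "v q < Fin 0"
      proof (cases "a = 0")
        case True then show ?thesis using qma m0 by simp
      next
        case False
        obtain ga where ga: "v a = Fin ga" using vfin[OF val False] by blast
        have "ga \<in> value_group v K" using ga a False unfolding value_group_def by auto
        then have "v m < v a" using small ga by simp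
        then have "v q = v m" using qma vless[OF val] by simp
        then show ?thesis using m0 by simp
      qed
      then show False using vq by simp
    qed
    define y' where "y' = y - a * w"
    have yqw: "y = q * w" unfolding q_def using w0 by simp
    have y'mw: "y' = m * w" unfolding y'_def yqw qma by (simp add: algebra_simps)
    have y'sum: "y' = y + (\<Sum>b\<in>B. (a * c b) * b)"
      unfolding y'_def w_def S_def by (simp add: sum_distrib_left mult.assoc)
    define A where "A z = {b\<in>B. \<exists>g\<in>value_group v K. v z \<le> v b + Fin g}" for z
    have vy': "v y' = v m + Fin (g0 + gb)" using y'mw vmult[OF val] vw vy by simp
    have m_pos: "Fin 0 < v m" using mbig vg0[OF val K] by blast
    have "v y \<le> v y'"
    proof -
      have "Fin 0 + Fin (g0 + gb) \<le> v m + Fin (g0 + gb)" using m_pos by (intro add_right_mono) simp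
      then show ?thesis using vy vy' by simp
    qed
    then have sub: "A y' \<subseteq> A y" unfolding A_def by (auto intro: order_trans)
    have inA: "b0 \<in> A y" unfolding A_def using b0 g0K vy gb by (auto simp: add.commute intro!: bexI[of _ g0])
    have notA: "b0 \<notin> A y'"
    proof
      assume "b0 \<in> A y'"
      then obtain g where g: "g \<in> value_group v K" "v y' \<le> v b0 + Fin g" unfolding A_def by blast
      have "g - g0 \<in> value_group v K" using vg_diff[OF val K g(1) g0K] .
      then have lt: "Fin (g - g0) < v m" using mbig by blast
      show False
      proof (cases "v m")
        case (Fin mm)
        then have "g - g0 < mm" using lt by simp
        then have "gb + g < mm + (g0 + gb)" by (simp add: algebra_simps)
        then show False using g(2) vy' Fin gb by simp
      next
        case Pinf then show False using g(2) vy' gb by simp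
      next
        case Minf then show False using lt by simp
      qed
    qed
    have "A y' \<subset> A y" using sub inA notA by blast
    moreover have "finite (A y)" using fin unfolding A_def by simp
    ultimately have "card (A y') < card (A y)" by (rule psubset_card_mono[rotated])
    then have "cnt v K B y' < cnt v K B y" unfolding cnt_def A_def by simp
    then obtain c' where c'K: "c' ` B \<subseteq> K" and o: "orth v K B (y' - (\<Sum>b\<in>B. c' b * b))"
      using less by blast
    define c'' where "c'' b = c' b - a * c b" for b
    have "c'' ` B \<subseteq> K" using c'K cK a K unfolding c''_def by (auto intro!: subfield_diff subfield_mult)
    moreover have "y - (\<Sum>b\<in>B. c'' b * b) = y' - (\<Sum>b\<in>B. c' b * b)"
      unfolding y'sum c''_def by (simp add: left_diff_distrib sum_subtractf)
    ultimately show ?thesis using o by metis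
  qed
qed



theorem lemma5p12:
  fixes v :: "'b::field \<Rightarrow> 'g::linordered_ab_group_add extended"
    and K :: "'b set"
  assumes "valuation v"
    and "subfield K"
    and "\<forall>y. \<exists>x a. a \<in> K \<and> y = x + a \<and> abs_val_gt v K x"
  shows "vs_defectless v K"
  unfolding vs_defectless_def
proof (intro allI impI)
  note val = assms(1) and K = assms(2) and hyp = assms(3)
  fix F :: "'b set" assume "finite F"
  then show "\<exists>B. val_independent v K B \<and> Kspan K B = Kspan K F"
  proof (induction F rule: finite_induct)
    case empty
    have "val_independent v K {}" unfolding val_independent_def using v0[OF val] by simp
    then show ?case by blast
  next
    case (insert y F)
    then obtain B where vi: "val_independent v K B" and sp: "Kspan K B = Kspan K F" by blast
    have finB: "finite B" using vi unfolding val_independent_def by simp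
    show ?case
    proof (cases "y \<in> Kspan K F")
      case True
      have "Kspan K (insert y F) = Kspan K F"
      proof -
        have "t * y + u \<in> Kspan K F" if "t \<in> K" "u \<in> Kspan K F" for t u
          using Kspan_add[OF K insert(1) Kspan_smult[OF K insert(1) True that(1)] that(2)] .
        moreover have "u \<in> Kspan K F \<Longrightarrow> \<exists>t u'. u = t * y + u' \<and> t \<in> K \<and> u' \<in> Kspan K F" for u
          using subfield_0[OF K] by (intro exI[of _ 0] exI[of _ u]) simp
        ultimately show ?thesis unfolding Kspan_insert[OF K insert(1,2)] by blast
      qed
      then show ?thesis using vi sp by metis
    next
      case False
      obtain c where cK: "c ` B \<subseteq> K" and o: "orth v K B (y - (\<Sum>b\<in>B. c b * b))"
        using approx[OF val K hyp vi] by blast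
      define ws where "ws = (\<Sum>b\<in>B. c b * b)"
      define z where "z = y - ws"
      have wsB: "ws \<in> Kspan K B" unfolding ws_def Kspan_def using finB cK by blast
      have zB: "z \<notin> B"
      proof
        assume "z \<in> B"
        then have "z \<in> Kspan K B" using Kspan_sub[OF K finB] by blast
        then have "z + ws \<in> Kspan K B" using Kspan_add[OF K finB _ wsB] by blast
        then show False using False sp z_def by simp
      qed
      have vi2: "val_independent v K (insert z B)"
        using vi_insert[OF val K vi zB] o z_def ws_def by simp
      have "Kspan K (insert z B) = Kspan K (insert y F)"
      proof -
        have "{t * z + u | t u. t \<in> K \<and> u \<in> Kspan K B} = {t * y + u | t u. t \<in> K \<and> u \<in> Kspan K F}"
        proof (intro set_eqI iffI)
          fix x assume "x \<in> {t * z + u | t u. t \<in> K \<and> u \<in> Kspan K B}"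
          then obtain t u where tu: "t \<in> K" "u \<in> Kspan K B" "x = t * z + u" by blast
          have "u - t * ws \<in> Kspan K B" using Kspan_diff[OF K finB tu(2) Kspan_smult[OF K finB wsB tu(1)]] .
          moreover have "x = t * y + (u - t * ws)" using tu(3) by (simp add: z_def algebra_simps)
          ultimately show "x \<in> {t * y + u | t u. t \<in> K \<and> u \<in> Kspan K F}" using tu sp by blast
        next
          fix x assume "x \<in> {t * y + u | t u. t \<in> K \<and> u \<in> Kspan K F}"
          then obtain t u where tu: "t \<in> K" "u \<in> Kspan K B" "x = t * y + u" using sp by blast
          have "u + t * ws \<in> Kspan K B" using Kspan_add[OF K finB tu(2) Kspan_smult[OF K finB wsB tu(1)]] .
          moreover have "x = t * z + (u + t * ws)" using tu(3) by (simp add: z_def algebra_simps)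
          ultimately show "x \<in> {t * z + u | t u. t \<in> K \<and> u \<in> Kspan K B}" using tu by blast
        qed
        then show ?thesis unfolding Kspan_insert[OF K finB zB] Kspan_insert[OF K insert(1,2)] .
      qed
      then show ?thesis using vi2 by blast
    qed
  qed
qed

end
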